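(* Let $x_0\in\mathbb{R}^d$, let $\beta\in\mathbb{R}$, let $(\alpha_k)_{k\ge 0}$ be nonzero step sizes, and let $\xi_0,\xi_1,\dots$ be a fixed sequence of samples. Consider the momentum method $$m_0=0,\qquad m_{k+1}=\beta m_k+(1-\beta)\nabla f(x_k,\xi_k),\qquad x_{k+1}=x_k-\alpha_k m_{k+1}\quad(k\ge 0),$$ and the iterate-averaging method $$x'_0=z_0=x_0,\qquad z_{k+1}=z_k-\eta_k\nabla f(x'_k,\xi_k),\qquad x'_{k+1}=(1-c_{k+1})x'_k+c_{k+1}z_{k+1}\quad(k\ge 0).$$ Suppose $c_1\in(0,1)$, that for all $k\ge 1$ $$c_{k+1}=\beta\,\frac{\alpha_k}{\alpha_{k-1}}\,\frac{c_k}{1-c_k},$$ and that for all $k\ge 0$ $$\eta_k=\frac{\alpha_k}{c_{k+1}}(1-\beta),$$ where all these quantities are assumed well defined (i.e. $c_k\notin\{0,1\}$ for all $k\ge1$). Then $x_k=x'_k$ for all $k\ge 0$.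
   Context: $\nabla f(x,\xi)$ denotes the (sub)gradient of $f(\cdot,\xi)$ at $x$ returned for sample $\xi$; both methods use the same samples $\xi_k$ at step $k$. No projection is involved (the constraint set is all of $\mathbb{R}^d$). *)

theory Defs
  imports "HOL-Analysis.Analysis"
begin

end

theory Submission
  imports Defs
begin

theorem theorem1:
  fixes g :: "real ^ 'n \<Rightarrow> 's \<Rightarrow> real ^ 'n"
    and \<xi> :: "nat \<Rightarrow> 's"
    and x0 :: "real ^ 'n"
    and \<beta> :: real
    and \<alpha> \<eta> c :: "nat \<Rightarrow> real"
    and x m x' z :: "nat \<Rightarrow> real ^ 'n"
  assumes alpha_nz: "\<And>k. \<alpha> k \<noteq> 0"
    and m0: "m 0 = 0"
    and x0: "x 0 = x0"
    and m_step: "\<And>k. m (Suc k) = \<beta> *\<^sub>R m k + (1 - \<beta>) *\<^sub>R g (x k) (\<xi> k)"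
    and x_step: "\<And>k. x (Suc k) = x k - \<alpha> k *\<^sub>R m (Suc k)"
    and x'0: "x' 0 = x0"
    and z0: "z 0 = x0"
    and z_step: "\<And>k. z (Suc k) = z k - \<eta> k *\<^sub>R g (x' k) (\<xi> k)"
    and x'_step: "\<And>k. x' (Suc k) = (1 - c (Suc k)) *\<^sub>R x' k + c (Suc k) *\<^sub>R z (Suc k)"
    and c1: "0 < c 1" "c 1 < 1"
    and c_wd: "\<And>k. k \<ge> 1 \<Longrightarrow> c k \<noteq> 0 \<and> c k \<noteq> 1"
    and c_rec: "\<And>k. k \<ge> 1 \<Longrightarrow> c (Suc k) = \<beta> * (\<alpha> k / \<alpha> (k - 1)) * (c k / (1 - c k))"
    and eta_def: "\<And>k. \<eta> k = \<alpha> k / c (Suc k) * (1 - \<beta>)"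
  shows "\<forall>k. x k = x' k"
proof -
  define D where "D k = (if k = 0 then 0 else \<alpha> (k - 1) * (1 - c k) / c k)" for k
  have cnz: "c (Suc k) \<noteq> 0" for k using c_wd[of "Suc k"] by simp
  have key: "D k *\<^sub>R m k = (\<alpha> k * \<beta> / c (Suc k)) *\<^sub>R m k" for k
  proof (cases k)
    case 0 then show ?thesis by (simp add: m0)
  next
    case (Suc j)
    have h: "c (Suc k) = \<beta> * (\<alpha> k / \<alpha> j) * (c k / (1 - c k))"
      using c_rec[of k] Suc by simp
    have ck: "c k \<noteq> 0" "1 - c k \<noteq> 0" using c_wd[of k] Suc by auto
    have "\<beta> \<noteq> 0" using h cnz by auto
    have "\<alpha> k * \<beta> / c (Suc k) = \<alpha> j * (1 - c k) / c k"
      unfolding h using ck alpha_nz[of k] alpha_nz[of j] \<open>\<beta> \<noteq> 0\<close> by (simp add: field_simps)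
    then show ?thesis using Suc by (simp add: D_def)
  qed
  have P: "x' k = x k \<and> z k = x k - D k *\<^sub>R m k" for k
  proof (induction k)
    case 0 then show ?case by (simp add: x0 x'0 z0 m0 D_def)
  next
    case (Suc k)
    have zs: "z (Suc k) = x k - (\<alpha> k / c (Suc k)) *\<^sub>R m (Suc k)"
    proof -
      let ?G = "g (x k) (\<xi> k)"
      have "z (Suc k) = x k - (\<alpha> k * \<beta> / c (Suc k)) *\<^sub>R m k - (\<alpha> k / c (Suc k) * (1 - \<beta>)) *\<^sub>R ?G"
        using Suc key[of k] unfolding z_step eta_def by simp
      also have "\<dots> = x k - (\<alpha> k / c (Suc k)) *\<^sub>R (\<beta> *\<^sub>R m k + (1 - \<beta>) *\<^sub>R ?G)"
        proof -
          have "(\<alpha> k / c (Suc k)) *\<^sub>R (\<beta> *\<^sub>R m k + (1 - \<beta>) *\<^sub>R ?G) = (\<alpha> k / c (Suc k) * \<beta>) *\<^sub>R m k + (\<alpha> k / c (Suc k) * (1 - \<beta>)) *\<^sub>R ?G"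
            by (simp only: scaleR_add_right scaleR_scaleR)
          moreover have "\<alpha> k / c (Suc k) * \<beta> = \<alpha> k * \<beta> / c (Suc k)" by simp
          ultimately show ?thesis by (simp add: diff_diff_eq)
        qed
      finally show ?thesis unfolding m_step .
    qed
    have xs: "x' (Suc k) = x (Suc k)"
    proof -
      have "x' (Suc k) = x k - (c (Suc k) * (\<alpha> k / c (Suc k))) *\<^sub>R m (Suc k)"
        unfolding x'_step zs using Suc
        by (simp add: scaleR_diff_right scaleR_diff_left scaleR_scaleR)
      also have "c (Suc k) * (\<alpha> k / c (Suc k)) = \<alpha> k" using cnz[of k] by simp
      finally show ?thesis unfolding x_step .
    qed
    have e: "\<alpha> k / c (Suc k) = \<alpha> k + \<alpha> k * (1 - c (Suc k)) / c (Suc k)"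
      using cnz[of k] by (simp add: field_simps)
    have "z (Suc k) = x (Suc k) - D (Suc k) *\<^sub>R m (Suc k)"
      unfolding zs x_step D_def e by (simp add: scaleR_add_left)
    with xs show ?case by simp
  qed
  show ?thesis using P by simp
qed

end
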